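(* Let $\lambda\in\mathbb{C}$, $\lambda\ne1$, $\alpha\in\mathbb{C}$, $c\in\mathbb{C}\setminus\{0\}$, and let $S_n(x)\sim\left(\left(\frac{e^{(\lambda-1)t}-\lambda}{1-\lambda}\right)^{\alpha},\ \frac{t^2(1+t)^c}{\log(1+t)}\right)$. Then for $n\ge1$, $$S_n(x)=\sum_{l=0}^{n-1}\binom{n-1}{l}N_l^{(n)}(-nc)\,A_{n-l}^{(\alpha)}(x\mid\lambda).$$
   Context: For invertible $g(t)$ (nonzero constant term) and delta series $f(t)$ ($f(0)=0$, nonzero coefficient of $t$), the Sheffer sequence $S_n(x)\sim(g(t),f(t))$ is the unique polynomial sequence with $\sum_{k\ge0}S_k(y)\frac{t^k}{k!}=\frac{1}{g(\bar f(t))}e^{y\bar f(t)}$ for all $y\in\mathbb{C}$, where $\bar f$ is the compositional inverse of $f$. Complex powers of series with constant term $1$ are defined by $h^a=\exp(a\log h)$. The Narumi polynomials of order $a$ are defined by $\left(\frac{\log(1+t)}{t}\right)^a(1+t)^x=\sum_{n\ge0}N_n^{(a)}(x)\frac{t^n}{n!}$. The Frobenius-type Eulerian polynomials of order $\alpha$ are defined by $\left(\frac{1-\lambda}{e^{(\lambda-1)t}-\lambda}\right)^{\alpha}e^{xt}=\sum_{n\ge0}A_n^{(\alpha)}(x\mid\lambda)\frac{t^n}{n!}$. *)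

theory Defs
  imports "HOL-Computational_Algebra.Computational_Algebra"
begin

abbreviation fps_log1p :: "complex fps" where
  "fps_log1p \<equiv> fps_ln 1"

text \<open>Complex power of a series h with constant term 1: h^a = exp(a log h),
  where log h = log(1 + (h - 1)).\<close>
definition fps_powc :: "complex fps \<Rightarrow> complex \<Rightarrow> complex fps" where
  "fps_powc h a = fps_exp a oo (fps_log1p oo (h - 1))"

text \<open>Sheffer sequence S ~ (g, f): for all y,
  sum_k S_k(y) t^k/k! = 1/g(fbar t) * exp(y fbar t).\<close>
definition sheffer :: "complex fps \<Rightarrow> complex fps \<Rightarrow> (nat \<Rightarrow> complex poly) \<Rightarrow> bool" where
  "sheffer g f S \<longleftrightarrow>
     (\<forall>y::complex. Abs_fps (\<lambda>k. poly (S k) y / fact k) =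
        inverse (g oo fps_inv f) * (fps_exp y oo fps_inv f))"

text \<open>Narumi polynomials: (log(1+t)/t)^a (1+t)^x = sum N_n^(a)(x) t^n/n!.
  log(1+t)/t is written as fps_shift 1 (log(1+t)).\<close>
definition narumi :: "complex \<Rightarrow> nat \<Rightarrow> complex \<Rightarrow> complex" where
  "narumi a n x = fact n * (fps_powc (fps_shift 1 fps_log1p) a * fps_powc (1 + fps_X) x) $ n"

definition frob_euler :: "complex \<Rightarrow> complex \<Rightarrow> nat \<Rightarrow> complex \<Rightarrow> complex" where
  "frob_euler al lam n x = fact n *
     (fps_powc (fps_const (1 - lam) * inverse (fps_exp (lam - 1) - fps_const lam)) al * fps_exp x) $ n"

end

theory Submission
  imports Defs
begin


abbreviation lg :: "complex fps \<Rightarrow> complex fps" where "lg h \<equiv> fps_log1p oo (h - 1)"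

lemma lg0[simp]: "lg h $ 0 = 0" by simp

lemma powc_alt: "fps_powc h a = fps_exp a oo lg h" by (simp add: fps_powc_def)

lemma powc_nth0[simp]: "fps_powc h a $ 0 = 1" by (simp add: fps_powc_def)

lemma powc_add: "fps_powc h a * fps_powc h b = fps_powc h (a + b)"
  by (simp add: fps_powc_def fps_exp_add_mult fps_compose_mult_distrib)

lemma powc_zero[simp]: "fps_powc h 0 = 1" by (simp add: fps_powc_def)

lemma exp_ln: "fps_exp (1::complex) oo fps_log1p = 1 + fps_X"
proof -
  have L: "fps_log1p = fps_inv (fps_exp 1 - 1)" by (rule fps_ln_fps_exp_inv) simp
  have "(fps_exp (1::complex) - 1) oo fps_inv (fps_exp 1 - 1) = fps_X"
    by (rule fps_inv_right) simp_all
  hence "(fps_exp (1::complex) - 1) oo fps_log1p = fps_X" using L by simp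
  hence "(fps_exp (1::complex) oo fps_log1p) - 1 = fps_X" by (simp add: fps_compose_sub_distrib)
  thus ?thesis by (simp add: algebra_simps)
qed

lemma powc_one: assumes "h $ 0 = 1" shows "fps_powc h 1 = h"
proof -
  have "fps_powc h 1 = (fps_exp 1 oo fps_log1p) oo (h - 1)"
    unfolding fps_powc_def by (rule fps_compose_assoc) (simp_all add: assms)
  also have "\<dots> = h" by (simp add: exp_ln fps_compose_add_distrib assms)
  finally show ?thesis .
qed

lemma powc_nat: assumes "h $ 0 = 1" shows "fps_powc h (of_nat n) = h ^ n"
proof -
  have "fps_powc h (of_nat n) = fps_exp 1 ^ n oo lg h"
    by (simp add: fps_powc_def fps_exp_power_mult)
  also have "\<dots> = (fps_exp 1 oo lg h) ^ n" by (simp add: fps_compose_power)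
  also have "\<dots> = h ^ n" using powc_one[OF assms] by (simp add: fps_powc_def)
  finally show ?thesis .
qed

lemma powc_pow: "fps_powc h b ^ n = fps_powc h (of_nat n * b)"
  by (induct n) (simp_all add: powc_add[symmetric] algebra_simps)

lemma powc_neg: "fps_powc h (- a) = inverse (fps_powc h a)"
proof -
  have "fps_powc h (- a) * fps_powc h a = 1" by (simp add: powc_add)
  thus ?thesis by (metis fps_inverse_unique mult.commute)
qed

lemma deriv_lg: assumes "h $ 0 = 1" shows "fps_deriv (lg h) = fps_deriv h * inverse h"
proof -
  have "fps_deriv (lg h) = (fps_deriv fps_log1p oo (h - 1)) * fps_deriv h"
    using fps_compose_deriv[of "h - 1" fps_log1p] assms by simp
  also have "fps_deriv fps_log1p oo (h - 1) = inverse (1 + fps_X) oo (h - 1)"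
    by (simp add: fps_ln_deriv)
  also have "\<dots> = inverse ((1 + fps_X) oo (h - 1))"
    by (rule fps_inverse_compose) (simp_all add: assms)
  also have "(1 + fps_X) oo (h - 1) = h" by (simp add: fps_compose_add_distrib assms)
  finally show ?thesis by simp
qed

lemma lg_inverse: assumes "h $ 0 = 1" shows "lg (inverse h) = - lg h"
proof -
  have i0: "inverse h $ 0 = 1" using assms by simp
  have "fps_deriv (lg (inverse h)) = fps_deriv (- lg h)"
    unfolding deriv_lg[OF i0] fps_deriv_neg deriv_lg[OF assms]
    using assms by (simp add: fps_inverse_deriv power2_eq_square inverse_mult_eq_1)
  hence "lg (inverse h) = fps_const (lg (inverse h) $ 0 - (- lg h) $ 0) + (- lg h)"
    by (simp only: fps_deriv_eq_iff)
  thus ?thesis by simp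
qed

lemma powc_inverse: assumes "h $ 0 = 1" shows "fps_powc (inverse h) a = fps_powc h (- a)"
proof -
  have "fps_powc (inverse h) a = fps_exp a oo (- fps_X oo lg h)"
    by (simp add: fps_powc_def lg_inverse[OF assms] fps_compose_uminus)
  also have "\<dots> = (fps_exp a oo - fps_X) oo lg h"
    by (rule fps_compose_assoc) simp_all
  also have "\<dots> = fps_powc h (- a)" by (simp add: fps_powc_def)
  finally show ?thesis .
qed



lemma keycoef:
  fixes \<phi> :: "complex fps"
  assumes p0: "\<phi> $ 0 \<noteq> 0" and j: "j \<ge> 1"
  shows "(fps_X * fps_deriv (inverse \<phi>) * \<phi> ^ (j + 1)) $ j = - (\<phi> ^ j) $ j"
proof -
  have inv: "inverse \<phi> * \<phi> = 1" using p0 by (simp add: inverse_mult_eq_1)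
  have "fps_deriv (inverse \<phi>) * \<phi> ^ (j + 1) = - fps_deriv \<phi> * \<phi> ^ (j - 1) * (inverse \<phi> * \<phi>)^2"
    using j p0 by (simp add: fps_inverse_deriv power2_eq_square power_add[symmetric] algebra_simps
        flip: power_Suc)
  also have "\<dots> = - fps_deriv \<phi> * \<phi> ^ (j - 1)" using inv by simp
  finally have e: "fps_deriv (inverse \<phi>) * \<phi> ^ (j + 1) = - fps_deriv \<phi> * \<phi> ^ (j - 1)" .
  have d: "fps_deriv (\<phi> ^ j) = of_nat j * fps_deriv \<phi> * \<phi> ^ (j - 1)" by (rule fps_deriv_power')
  have "(fps_deriv \<phi> * \<phi> ^ (j - 1)) $ (j - 1) = (\<phi> ^ j) $ j"
  proof -
    have "of_nat j * (fps_deriv \<phi> * \<phi> ^ (j - 1)) $ (j - 1) = fps_deriv (\<phi> ^ j) $ (j - 1)"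
      unfolding d by (simp add: fps_of_nat mult.assoc)
    also have "\<dots> = of_nat j * (\<phi> ^ j) $ j" using j by (simp add: fps_deriv_nth)
    finally show ?thesis using j by simp
  qed
  moreover have "(fps_X * fps_deriv (inverse \<phi>) * \<phi> ^ (j + 1)) $ j
     = (fps_deriv (inverse \<phi>) * \<phi> ^ (j + 1)) $ (j - 1)"
    using j by (simp only: mult.assoc fps_X_mult_nth) simp
  ultimately show ?thesis unfolding e by simp
qed



lemma lemC:
  fixes \<phi> :: "complex fps"
  assumes p0: "\<phi> $ 0 \<noteq> 0" and i: "i < n"
  shows "((fps_X * inverse \<phi>) ^ i * fps_deriv (fps_X * inverse \<phi>) * \<phi> ^ n) $ (n - 1)
         = (if i = n - 1 then 1 else 0)"
proof -
  define \<psi> where "\<psi> = inverse \<phi>"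
  define j where "j = n - 1 - i"
  have n: "n = i + j + 1" using i j_def by simp
  have inv: "\<psi> * \<phi> = 1" using p0 by (simp add: \<psi>_def inverse_mult_eq_1)
  have "(fps_X * \<psi>) ^ i * fps_deriv (fps_X * \<psi>) * \<phi> ^ n
      = fps_X ^ i * ((\<psi> + fps_X * fps_deriv \<psi>) * \<phi> ^ (j + 1) * (\<psi> * \<phi>) ^ i)"
    unfolding n by (simp add: power_mult_distrib power_add fps_deriv_mult algebra_simps)
  also have "\<dots> = fps_X ^ i * (\<phi> ^ j * (\<psi> * \<phi>) + fps_X * fps_deriv \<psi> * \<phi> ^ (j + 1))"
    using inv by (simp add: algebra_simps)
  also have "\<dots> = fps_X ^ i * (\<phi> ^ j + fps_X * fps_deriv \<psi> * \<phi> ^ (j + 1))"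
    using inv by simp
  finally have e: "(fps_X * \<psi>) ^ i * fps_deriv (fps_X * \<psi>) * \<phi> ^ n
      = fps_X ^ i * (\<phi> ^ j + fps_X * fps_deriv \<psi> * \<phi> ^ (j + 1))" .
  have "((fps_X * \<psi>) ^ i * fps_deriv (fps_X * \<psi>) * \<phi> ^ n) $ (n - 1)
     = (\<phi> ^ j + fps_X * fps_deriv \<psi> * \<phi> ^ (j + 1)) $ j"
    unfolding e fps_X_power_mult_nth using n by simp
  also have "\<dots> = (if i = n - 1 then 1 else 0)"
  proof (cases "j = 0")
    case True
    then show ?thesis using n by (simp add: mult.assoc fps_X_mult_nth)
  next
    case False
    then show ?thesis using n keycoef[OF p0, of j] by (simp add: \<psi>_def)
  qed
  finally show ?thesis by (simp add: \<psi>_def)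
qed



lemma fps_inv_nth0[simp]: "fps_inv a $ 0 = 0"
  by (simp add: fps_inv_def)

lemma cutoff_split: "(D::complex fps) = (\<Sum>i<n. fps_const (D $ i) * fps_X ^ i) + fps_X ^ n * fps_shift n D"
proof (rule fps_ext)
  fix m
  have "(\<Sum>i<n. fps_const (D $ i) * fps_X ^ i) $ m = (\<Sum>i<n. if i = m then D $ i else 0)"
    by (simp add: fps_sum_nth fps_X_power_nth if_distrib cong: if_cong)
  also have "\<dots> = (if m < n then D $ m else 0)" by (simp add: sum.delta)
  finally show "D $ m = ((\<Sum>i<n. fps_const (D $ i) * fps_X ^ i) + fps_X ^ n * fps_shift n D) $ m"
    by (simp add: fps_X_power_mult_nth)
qed

lemma lagrange:
  fixes \<phi> H :: "complex fps"
  assumes p0: "\<phi> $ 0 \<noteq> 0" and n: "n \<ge> 1"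
  shows "of_nat n * (H oo fps_inv (fps_X * inverse \<phi>)) $ n = (fps_deriv H * \<phi> ^ n) $ (n - 1)"
proof -
  define f where "f = fps_X * inverse \<phi>"
  define K where "K = H oo fps_inv f"
  define D where "D = fps_deriv K"
  have f0: "f $ 0 = 0" by (simp add: f_def)
  have f1: "f $ 1 \<noteq> 0" using p0 by (simp add: f_def fps_X_mult_nth)
  have "K oo f = H oo (fps_inv f oo f)" unfolding K_def
    by (rule fps_compose_assoc[symmetric]) (simp_all add: f0)
  hence KH: "K oo f = H" using fps_inv[OF f0 f1] by simp
  have dH: "fps_deriv H = (D oo f) * fps_deriv f"
    unfolding D_def using fps_compose_deriv[OF f0, of K] KH by simp
  have Dsplit: "D oo f = (\<Sum>i<n. fps_const (D $ i) * f ^ i) + f ^ n * (fps_shift n D oo f)"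
    apply (subst cutoff_split[of D n])
    by (simp add: fps_compose_add_distrib fps_compose_sum_distrib fps_compose_mult_distrib[OF f0]
        fps_compose_power[OF f0, symmetric] f0)
  have fn: "f ^ n = fps_X ^ n * inverse \<phi> ^ n" by (simp add: f_def power_mult_distrib)
  have "fps_deriv H * \<phi> ^ n = (\<Sum>i<n. fps_const (D $ i) * (f ^ i * fps_deriv f * \<phi> ^ n))
        + fps_X ^ n * (inverse \<phi> ^ n * (fps_shift n D oo f) * fps_deriv f * \<phi> ^ n)"
    unfolding dH Dsplit fn by (simp add: algebra_simps sum_distrib_left sum_distrib_right)
  hence "(fps_deriv H * \<phi> ^ n) $ (n - 1) = (\<Sum>i<n. D $ i * (f ^ i * fps_deriv f * \<phi> ^ n) $ (n - 1))"
    using n by (simp add: fps_sum_nth fps_X_power_mult_nth)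
  also have "\<dots> = (\<Sum>i<n. D $ i * (if i = n - 1 then 1 else 0))"
  proof (intro sum.cong refl)
    fix i assume "i \<in> {..<n}"
    hence "(f ^ i * fps_deriv f * \<phi> ^ n) $ (n - 1) = (if i = n - 1 then 1 else 0)"
      unfolding f_def using lemC[OF p0] by blast
    thus "D $ i * (f ^ i * fps_deriv f * \<phi> ^ n) $ (n - 1) = D $ i * (if i = n - 1 then 1 else 0)"
      by simp
  qed
  also have "\<dots> = D $ (n - 1)" using n by (simp add: sum.delta if_distrib cong: if_cong)
  also have "\<dots> = of_nat n * K $ n" using n by (simp add: D_def fps_deriv_nth)
  finally show ?thesis by (simp add: K_def f_def)
qed



lemma coef_identity:
  assumes "l \<le> n - 1" "n \<ge> 1"
  shows "(fact (n - 1) :: complex) * of_nat (n - l) = of_nat ((n - 1) choose l) * fact l * fact (n - l)"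
proof -
  have a: "fact l * fact (n - 1 - l) * of_nat ((n - 1) choose l) = (fact (n - 1) :: complex)"
    using binomial_fact_lemma[OF assms(1)] by (metis of_nat_fact of_nat_mult)
  have b: "(fact (n - l) :: complex) = of_nat (n - l) * fact (n - 1 - l)"
  proof -
    have "n - l = Suc (n - 1 - l)" using assms by simp
    thus ?thesis by (simp only: fact_Suc)
  qed
  show ?thesis unfolding b a[symmetric] by (simp add: algebra_simps)
qed

theorem proposition8:
  fixes lam al c :: complex and S :: "nat \<Rightarrow> complex poly"
  assumes "lam \<noteq> 1" and "c \<noteq> 0"
    and "sheffer
           (fps_powc (fps_const (1 / (1 - lam)) * (fps_exp (lam - 1) - fps_const lam)) al)
           (fps_X * fps_powc (1 + fps_X) c * inverse (fps_shift 1 fps_log1p))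
           S"
  shows "\<forall>n\<ge>1. \<forall>x. poly (S n) x =
           (\<Sum>l = 0..n-1. of_nat ((n - 1) choose l) * narumi (of_nat n) l (- of_nat n * c)
              * frob_euler al lam (n - l) x)"
proof (intro allI impI)
  fix n :: nat and x :: complex
  assume n: "n \<ge> 1"
  define h where "h = fps_const (1 / (1 - lam)) * (fps_exp (lam - 1) - fps_const lam)"
  define k where "k = fps_const (1 - lam) * inverse (fps_exp (lam - 1) - fps_const lam)"
  define P where "P = fps_powc (1 + fps_X) c"
  define Q where "Q = fps_shift 1 fps_log1p"
  define \<phi> where "\<phi> = Q * inverse P"
  define F where "F = fps_inv (fps_X * inverse \<phi>)"
  define G0 where "G0 = fps_powc k al"
  define H where "H = G0 * fps_exp x"
  have lam: "1 - lam \<noteq> 0" using assms(1) by simp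
  have h0: "h $ 0 = 1" using lam by (simp add: h_def)
  have Q0: "Q $ 0 = 1" by (simp add: Q_def fps_ln_nth)
  have P0: "P $ 0 = 1" by (simp add: P_def)
  have p0: "\<phi> $ 0 \<noteq> 0" using Q0 P0 by (simp add: \<phi>_def)
  have finv: "fps_X * inverse \<phi> = fps_X * P * inverse Q"
    using P0 by (simp add: \<phi>_def fps_inverse_mult)
  have kh: "k = inverse h"
    using lam by (simp add: k_def h_def fps_inverse_mult fps_const_inverse)
  have ginv: "inverse (fps_powc h al) = G0"
    unfolding G0_def kh powc_inverse[OF h0] powc_neg ..
  have F0: "F $ 0 = 0" by (simp add: F_def)
  have "Abs_fps (\<lambda>k. poly (S k) x / fact k) =
        inverse (fps_powc h al oo F) * (fps_exp x oo F)"
    using assms(3) unfolding sheffer_def h_def[symmetric] P_def[symmetric] Q_def[symmetric]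
      finv[symmetric] F_def[symmetric] by blast
  also have "inverse (fps_powc h al oo F) = G0 oo F"
    using fps_inverse_compose[of F "fps_powc h al"] F0 ginv by simp
  also have "(G0 oo F) * (fps_exp x oo F) = H oo F"
    by (simp add: H_def fps_compose_mult_distrib[OF F0])
  finally have "Abs_fps (\<lambda>k. poly (S k) x / fact k) $ n = (H oo F) $ n" by simp
  hence "poly (S n) x / fact n = (H oo F) $ n" by simp
  hence SH: "poly (S n) x = fact n * (H oo F) $ n" by (simp add: field_simps)
  have lag: "of_nat n * (H oo F) $ n = (fps_deriv H * \<phi> ^ n) $ (n - 1)"
    unfolding F_def by (rule lagrange[OF p0 n])
  have phin: "\<phi> ^ n = fps_powc Q (of_nat n) * fps_powc (1 + fps_X) (- of_nat n * c)"
    by (simp add: \<phi>_def power_mult_distrib powc_nat[OF Q0] P_def powc_neg[symmetric]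
        powc_pow fps_inverse_power[symmetric])
  have nar: "narumi (of_nat n) l (- of_nat n * c) = fact l * (\<phi> ^ n) $ l" for l
    by (simp add: narumi_def phin Q_def)
  have fe: "frob_euler al lam m x = fact m * H $ m" for m
    by (simp add: frob_euler_def H_def G0_def k_def)
  have "poly (S n) x = fact (n - 1) * (of_nat n * (H oo F) $ n)"
  proof -
    obtain m where m: "n = Suc m" using n by (cases n) auto
    show ?thesis using SH unfolding m by (simp add: algebra_simps)
  qed
  also have "\<dots> = fact (n - 1) * (\<phi> ^ n * fps_deriv H) $ (n - 1)"
    unfolding lag by (simp add: mult.commute)
  also have "\<dots> = (\<Sum>l = 0..n-1. fact (n - 1) * ((\<phi> ^ n) $ l * (of_nat (n - l) * H $ (n - l))))"
    unfolding fps_mult_nth sum_distrib_left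
  proof (intro sum.cong refl)
    fix l assume "l \<in> {0..n-1}"
    hence e: "n - 1 - l + 1 = n - l" using n by auto
    have "fps_deriv H $ (n - 1 - l) = of_nat (n - l) * H $ (n - l)"
      unfolding fps_deriv_nth e ..
    thus "fact (n - 1) * ((\<phi> ^ n) $ l * fps_deriv H $ (n - 1 - l)) =
          fact (n - 1) * ((\<phi> ^ n) $ l * (of_nat (n - l) * H $ (n - l)))" by simp
  qed
  also have "\<dots> = (\<Sum>l = 0..n-1. of_nat ((n - 1) choose l) * narumi (of_nat n) l (- of_nat n * c)
              * frob_euler al lam (n - l) x)"
  proof (intro sum.cong refl)
    fix l assume "l \<in> {0..n-1}"
    hence l: "l \<le> n - 1" by simp
    show "fact (n - 1) * ((\<phi> ^ n) $ l * (of_nat (n - l) * H $ (n - l))) =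
      of_nat ((n - 1) choose l) * narumi (of_nat n) l (- of_nat n * c) * frob_euler al lam (n - l) x"
      unfolding nar fe using coef_identity[OF l n]
      by (simp add: algebra_simps)
  qed
  finally show "poly (S n) x = (\<Sum>l = 0..n-1. of_nat ((n - 1) choose l) * narumi (of_nat n) l (- of_nat n * c)
              * frob_euler al lam (n - l) x)" .
qed


end
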